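(* Let $u$ be a positive solution of $\frac{u''}{1+(u')^2}=\frac{xu'}{2}-\frac u2+\frac{n-1}{u}$ on a finite interval $(x_1,x_2)$. If $u'<0$ and $u''>0$ on $(x_1,x_2)$, then $\lim_{x\to x_2}u(x)>0$.
   Context: $n\ge 2$ is a fixed integer. *)

theory Defs
  imports "HOL-Analysis.Analysis"
begin

end

theory Submission
  imports Defs
begin

theorem lemma2p4:
  fixes n :: nat and u u' u'' :: "real \<Rightarrow> real" and x\<^sub>1 x\<^sub>2 :: real
  assumes n: "n \<ge> 2"
    and interval: "x\<^sub>1 < x\<^sub>2"
    and d1: "\<And>x. x \<in> {x\<^sub>1<..<x\<^sub>2} \<Longrightarrow> (u has_real_derivative u' x) (at x)"
    and d2: "\<And>x. x \<in> {x\<^sub>1<..<x\<^sub>2} \<Longrightarrow> (u' has_real_derivative u'' x) (at x)"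
    and pos: "\<And>x. x \<in> {x\<^sub>1<..<x\<^sub>2} \<Longrightarrow> u x > 0"
    and ode: "\<And>x. x \<in> {x\<^sub>1<..<x\<^sub>2} \<Longrightarrow>
               u'' x / (1 + (u' x)\<^sup>2) = x * u' x / 2 - u x / 2 + (real n - 1) / u x"
    and dec: "\<And>x. x \<in> {x\<^sub>1<..<x\<^sub>2} \<Longrightarrow> u' x < 0"
    and convex: "\<And>x. x \<in> {x\<^sub>1<..<x\<^sub>2} \<Longrightarrow> u'' x > 0"
  shows "\<exists>L. (u \<longlongrightarrow> L) (at_left x\<^sub>2) \<and> L > 0"
proof -
  define x0 where "x0 = (x\<^sub>1 + x\<^sub>2) / 2"
  have x0: "x\<^sub>1 < x0" "x0 < x\<^sub>2" using interval by (auto simp: x0_def)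
  define S where "S = {x0..<x\<^sub>2}"
  have Sin: "x \<in> {x\<^sub>1<..<x\<^sub>2}" if "x \<in> S" for x using that x0 by (auto simp: S_def)
  have udec: "u b \<le> u a" if "a \<in> S" "b \<in> S" "a \<le> b" for a b
  proof (cases "a = b")
    case False
    hence "a < b" using that by auto
    have "u b < u a"
      apply (rule DERIV_neg_imp_decreasing[OF \<open>a < b\<close>])
      apply (rule_tac x="u' x" in exI)
      using that x0 by (auto simp: S_def intro!: d1 dec)
    thus ?thesis by simp
  qed simp
  have u'inc: "u' a \<le> u' b" if "a \<in> S" "b \<in> S" "a \<le> b" for a b
  proof (cases "a = b")
    case False
    hence "a < b" using that by auto
    have "u' a < u' b"
      apply (rule DERIV_pos_imp_increasing[OF \<open>a < b\<close>])
      apply (rule_tac x="u'' x" in exI)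
      using that x0 by (auto simp: S_def intro!: d2 convex)
    thus ?thesis by simp
  qed simp
  have x0S: "x0 \<in> S" using x0 by (auto simp: S_def)
  define L where "L = Inf (u ` S)"
  have upS: "u x > 0" if "x \<in> S" for x using pos Sin that by blast
  have bdd: "bdd_below (u ` S)" using upS by (intro bdd_belowI[of _ 0]) (auto simp: less_imp_le)
  have ne: "u ` S \<noteq> {}" using x0S by auto
  have Lle: "L \<le> u x" if "x \<in> S" for x using cInf_lower[OF _ bdd] that by (auto simp: L_def)
  have L0: "L \<ge> 0" unfolding L_def using ne upS by (intro cInf_greatest) (auto simp: less_imp_le)
  have lim: "(u \<longlongrightarrow> L) (at_left x\<^sub>2)"
  proof (rule order_tendstoI)
    fix a assume "a < L"
    have "eventually (\<lambda>x. x \<in> S) (at_left x\<^sub>2)"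
      unfolding S_def eventually_at_left_field using x0 by (auto intro!: exI[of _ x0])
    thus "eventually (\<lambda>x. a < u x) (at_left x\<^sub>2)"
      by eventually_elim (use Lle \<open>a < L\<close> in force)
  next
    fix a assume "L < a"
    then obtain y where y: "y \<in> S" "u y < a" using cInf_lessD[OF ne] unfolding L_def by auto
    have "eventually (\<lambda>x. x \<in> S \<and> y \<le> x) (at_left x\<^sub>2)"
      unfolding eventually_at_left_field using y by (auto simp: S_def intro!: exI[of _ y])
    thus "eventually (\<lambda>x. u x < a) (at_left x\<^sub>2)"
      by eventually_elim (use udec y in force)
  qed
  have "L > 0"
  proof (rule ccontr)
    assume "\<not> L > 0"
    hence L00: "L = 0" using L0 by auto
    define M where "M = - u' x0"
    have M: "M > 0" using dec Sin x0S by (auto simp: M_def)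
    define k where "k = real n - 1"
    have k: "k > 0" using n by (auto simp: k_def)
    define B where "B = max \<bar>x0\<bar> \<bar>x\<^sub>2\<bar>"
    define C where "C = B * M / 2 + u x0 / 2"
    have B0: "B \<ge> 0" by (auto simp: B_def)
    have C0: "C \<ge> 0" using B0 M pos[OF Sin[OF x0S]] by (auto simp: C_def)
    define G where "G = (\<lambda>x. u' x + (k / M) * ln (u x) + C * x)"
    have u'ge: "u' x \<ge> -M" if "x \<in> S" for x using u'inc[OF x0S that] that by (auto simp: M_def S_def)
    have u''ge: "u'' x \<ge> k / u x - C" if xS: "x \<in> S" for x
    proof -
      have xi: "x \<in> {x\<^sub>1<..<x\<^sub>2}" using Sin xS .
      have up: "u x > 0" using pos xi .
      define b where "b = x * u' x / 2 - u x / 2 + k / u x"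
      have pp: "1 + (u' x)\<^sup>2 > 0" by (simp add: add_pos_nonneg)
      have bq: "b = u'' x / (1 + (u' x)\<^sup>2)" using ode[OF xi] by (simp add: b_def k_def)
      have bpos: "b > 0" unfolding bq using convex[OF xi] pp by simp
      have ub: "u'' x = b * (1 + (u' x)\<^sup>2)" unfolding bq using pp by simp
      have "b \<le> u'' x" unfolding ub using bpos by (simp add: algebra_simps)
      moreover have "\<bar>x\<bar> \<le> B" using xS by (auto simp: B_def S_def)
      moreover have "\<bar>u' x\<bar> \<le> M" using u'ge[OF xS] dec[OF xi] by auto
      ultimately have "\<bar>x * u' x\<bar> \<le> B * M" by (simp add: abs_mult mult_mono')
      hence xu: "x * u' x \<ge> - (B * M)" by linarith
      have ux: "u x \<le> u x0" using udec[OF x0S xS] xS by (auto simp: S_def)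
      have "b \<ge> k / u x - C" unfolding b_def C_def using xu ux by (simp add: field_simps)
      thus ?thesis using \<open>b \<le> u'' x\<close> by linarith
    qed
    have Gd: "(G has_real_derivative (u'' x + (k / M) * (u' x / u x) + C)) (at x)" if "x \<in> S" for x
      unfolding G_def using d1[OF Sin[OF that]] d2[OF Sin[OF that]] pos[OF Sin[OF that]] M
      by (auto intro!: derivative_eq_intros simp: field_simps)
    have Gdnn: "u'' x + (k / M) * (u' x / u x) + C \<ge> 0" if xS: "x \<in> S" for x
    proof -
      have up: "u x > 0" using pos Sin xS by auto
      have "(k / M) * (u' x / u x) = (k / u x) * (u' x / M)" by (simp add: field_simps)
      also have "\<dots> \<ge> (k / u x) * (-1)"
        using u'ge[OF xS] M k up by (intro mult_left_mono) (auto simp: field_simps)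
      finally show ?thesis using u''ge[OF xS] by linarith
    qed
    have Gmono: "G x0 \<le> G x" if "x \<in> S" for x
    proof (cases "x = x0")
      case False
      hence "x0 < x" using that by (auto simp: S_def)
      show ?thesis
        apply (rule DERIV_nonneg_imp_nondecreasing[OF less_imp_le[OF \<open>x0 < x\<close>]])
        apply (rule_tac x="u'' xa + (k / M) * (u' xa / u xa) + C" in exI)
        apply (rule conjI[OF Gd Gdnn])
        using that \<open>x0 < x\<close> by (auto simp: S_def)
    qed simp
    define \<epsilon> where "\<epsilon> = exp ((G x0 - C * B) * M / k)"
    have "\<epsilon> > 0" by (simp add: \<epsilon>_def)
    then obtain y where y: "y \<in> S" "u y < \<epsilon>" using cInf_lessD[OF ne, of \<epsilon>] L00 unfolding L_def by auto
    have up: "u y > 0" using upS y by auto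
    have "ln (u y) < (G x0 - C * B) * M / k"
    proof -
      have "ln (u y) < ln \<epsilon>" using y(2) up \<open>\<epsilon> > 0\<close> by simp
      thus ?thesis by (simp add: \<epsilon>_def)
    qed
    hence "(k / M) * ln (u y) < G x0 - C * B" using k M by (simp add: field_simps)
    moreover have "C * y \<le> C * B" using C0 y by (auto simp: B_def S_def intro!: mult_left_mono)
    moreover have "u' y < 0" using dec Sin y by auto
    ultimately have "G y < G x0" unfolding G_def by linarith
    with Gmono[OF y(1)] show False by simp
  qed
  with lim show ?thesis by blast
qed

end
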